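(* The advised language family $\mathrm{1QFA}/n$ does not satisfy the partial order condition; specifically, the language $L_a=\{wa\mid w\in\{a,b\}^*\}$ over $\Sigma=\{a,b\}$, which violates the partial order condition, belongs to $\mathrm{1QFA}/n$.
   Context: A 1qfa is a one-way measure-many quantum finite automaton (input between endmarkers $\cent$ and $\$$, one unitary per scanned symbol followed by a projection measurement onto accepting/rejecting/non-halting subspaces at every step). For equal-length strings $x\in\Sigma^n,y\in\Gamma^n$, $\genfrac{[}{]}{0pt}{}{x}{y}$ is the two-track string with $x$ on the upper track and $y$ on the lower track. $\mathrm{1QFA}/n$ is the family of languages $L$ for which there exist a 1qfa $M$, $\varepsilon\in[0,1/2)$, an advice alphabet $\Gamma$ and an advice function $h:\mathbb{N}\to\Gamma^*$ with $|h(n)|=n$ such that $M$ on input $\genfrac{[}{]}{0pt}{}{x}{h(|x|)}$ outputs $L(x)$ (1 if $x\in L$, 0 otherwise) with probability at least $1-\varepsilon$ for every $x$. A language satisfies the partial order condition (Brodsky–Pippenger) exactly when its minimal deterministic finite automaton (with transition function extended to strings $\hat\delta$) contains no two inner states $q_1,q_2$ such that (i) there is a string $z$ with $\hat\delta(q_1,z)$ accepting and $\hat\delta(q_2,z)$ not accepting or vice versa, and (ii) there are nonempty strings $x,y$ with $\hat\delta(q_1,x)=\hat\delta(q_2,x)=q_2$ and $\hat\delta(q_2,y)=q_1$. Every language recognized by a bounded-error 1qfa without advice satisfies this condition. *)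

theory Defs
  imports Complex_Main
begin

datatype ab = a | b

definition La :: "ab list set" where
  "La = {w @ [a] | w. True}"

text \<open>The minimal (complete, reachable) DFA of L is realised by Myhill--Nerode:
  its states are the left quotients u\<inverse>L, the transition on a string x maps
  u\<inverse>L to (ux)\<inverse>L, and u\<inverse>L is accepting iff the empty word belongs to it.
  Hence hat-delta(q,z) is accepting iff z belongs to the quotient q.\<close>

definition lquot :: "'s list set \<Rightarrow> 's list \<Rightarrow> 's list set" where
  "lquot L u = {z. u @ z \<in> L}"

definition partial_order_condition :: "'s list set \<Rightarrow> bool" where
  "partial_order_condition L \<longleftrightarrow>
     \<not> (\<exists>u1 u2.
           (\<exists>z. (z \<in> lquot L u1) \<noteq> (z \<in> lquot L u2)) \<and>
           (\<exists>x y. x \<noteq> [] \<and> y \<noteq> [] \<and>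
              lquot L (u1 @ x) = lquot L u2 \<and>
              lquot L (u2 @ x) = lquot L u2 \<and>
              lquot L (u2 @ y) = lquot L u1))"

datatype 'c tsym = Cent | Dollar | Sym 'c

record 'c qfa =
  dim :: nat
  trans :: "'c tsym \<Rightarrow> nat \<Rightarrow> nat \<Rightarrow> complex"
  init :: nat
  accs :: "nat set"
  rejs :: "nat set"

definition unitary_mat :: "nat \<Rightarrow> (nat \<Rightarrow> nat \<Rightarrow> complex) \<Rightarrow> bool" where
  "unitary_mat d U \<longleftrightarrow>
     (\<forall>i<d. \<forall>k<d. (\<Sum>j<d. cnj (U j i) * U j k) = (if i = k then 1 else 0))"

definition wf_qfa :: "'c qfa \<Rightarrow> bool" where
  "wf_qfa M \<longleftrightarrow> init M < dim M \<and> accs M \<subseteq> {..<dim M} \<and> rejs M \<subseteq> {..<dim M}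
     \<and> accs M \<inter> rejs M = {} \<and> (\<forall>s. unitary_mat (dim M) (trans M s))"

definition nonhalt :: "'c qfa \<Rightarrow> nat set" where
  "nonhalt M = {..<dim M} - accs M - rejs M"

definition mat_app :: "nat \<Rightarrow> (nat \<Rightarrow> nat \<Rightarrow> complex) \<Rightarrow> (nat \<Rightarrow> complex) \<Rightarrow> (nat \<Rightarrow> complex)" where
  "mat_app d U v = (\<lambda>i. \<Sum>j<d. U i j * v j)"

definition proj :: "nat set \<Rightarrow> (nat \<Rightarrow> complex) \<Rightarrow> (nat \<Rightarrow> complex)" where
  "proj S v = (\<lambda>i. if i \<in> S then v i else 0)"

definition nsq :: "nat \<Rightarrow> (nat \<Rightarrow> complex) \<Rightarrow> real" where
  "nsq d v = (\<Sum>i<d. (cmod (v i))\<^sup>2)"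

text \<open>One step: apply the unitary of the scanned symbol, then measure. The
  configuration records the unnormalised non-halting state and the accumulated
  acceptance and rejection probabilities.\<close>

definition qstep :: "'c qfa \<Rightarrow> 'c tsym \<Rightarrow> (nat \<Rightarrow> complex) \<times> real \<times> real
                     \<Rightarrow> (nat \<Rightarrow> complex) \<times> real \<times> real" where
  "qstep M s cfg = (case cfg of (psi, pa, pr) \<Rightarrow>
     (let phi = mat_app (dim M) (trans M s) psi
      in (proj (nonhalt M) phi, pa + nsq (dim M) (proj (accs M) phi),
          pr + nsq (dim M) (proj (rejs M) phi))))"

definition qrun :: "'c qfa \<Rightarrow> 'c list \<Rightarrow> (nat \<Rightarrow> complex) \<times> real \<times> real" where
  "qrun M w = fold (qstep M) (Cent # map Sym w @ [Dollar])
                 ((\<lambda>i. if i = init M then 1 else 0), 0, 0)"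

definition acc_prob :: "'c qfa \<Rightarrow> 'c list \<Rightarrow> real" where
  "acc_prob M w = fst (snd (qrun M w))"

definition rej_prob :: "'c qfa \<Rightarrow> 'c list \<Rightarrow> real" where
  "rej_prob M w = snd (snd (qrun M w))"

text \<open>The advice alphabet is a finite set of natural numbers (any finite
  alphabet can be encoded so). The two-track input [x; h(|x|)] is zip x (h |x|).\<close>

definition QFA_n :: "'s list set set" where
  "QFA_n = {L. \<exists>(M :: ('s \<times> nat) qfa) (eps :: real) (Gamma :: nat set) (h :: nat \<Rightarrow> nat list).
      wf_qfa M \<and> 0 \<le> eps \<and> eps < 1/2 \<and> finite Gamma \<and>
      (\<forall>n. length (h n) = n \<and> set (h n) \<subseteq> Gamma) \<and>
      (\<forall>x. (x \<in> L \<longrightarrow> acc_prob M (zip x (h (length x))) \<ge> 1 - eps) \<and>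
           (x \<notin> L \<longrightarrow> rej_prob M (zip x (h (length x))) \<ge> 1 - eps))}"

end

theory Submission
  imports Defs
begin

lemma La_iff: "v \<in> La \<longleftrightarrow> v \<noteq> [] \<and> last v = a"
proof
  assume "v \<in> La"
  then obtain w where "v = w @ [a]" unfolding La_def by blast
  then show "v \<noteq> [] \<and> last v = a" by simp
next
  assume h: "v \<noteq> [] \<and> last v = a"
  then have "v = butlast v @ [a]" by (metis append_butlast_last_id)
  then show "v \<in> La" unfolding La_def by blast
qed

lemma lq_b: "lquot La (u @ [b]) = lquot La []"
  unfolding lquot_def by (auto simp: La_iff)

lemma poc: "\<not> partial_order_condition La"
proof -
  have 1: "([] \<in> lquot La [a]) \<noteq> ([] \<in> lquot La [])" by (simp add: lquot_def La_iff)
  have 2: "lquot La ([a] @ [b]) = lquot La []" by (rule lq_b)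
  have 3: "lquot La ([] @ [b]) = lquot La []" using lq_b[of "[]"] by simp
  have 4: "lquot La ([] @ [a]) = lquot La [a]" by simp
  show ?thesis unfolding partial_order_condition_def not_not
    using 1 2 3 4 by blast
qed

definition swp :: "nat \<Rightarrow> nat \<Rightarrow> nat" where
  "swp k j = (if j = 0 then k else if j = k then 0 else j)"

definition kind :: "(ab \<times> nat) tsym \<Rightarrow> nat" where
  "kind s = (case s of Cent \<Rightarrow> 0 | Dollar \<Rightarrow> 2
     | Sym (c, g) \<Rightarrow> (if g = 1 then (if c = a then 1 else 2) else 0))"

definition TT :: "(ab \<times> nat) tsym \<Rightarrow> nat \<Rightarrow> nat \<Rightarrow> complex" where
  "TT s i j = (if i = swp (kind s) j then 1 else 0)"

definition MM :: "(ab \<times> nat) qfa" where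
  "MM = \<lparr>dim = 3, trans = TT, init = 0, accs = {1}, rejs = {2}\<rparr>"

lemma kind_cases: "kind s = 0 \<or> kind s = 1 \<or> kind s = 2"
  unfolding kind_def by (auto split: tsym.splits prod.splits)

lemma three: "{..<(3::nat)} = {0,1,2}" by auto

lemma unit: "unitary_mat 3 (TT s)"
  using kind_cases[of s]
  unfolding unitary_mat_def TT_def three
  by (auto simp: swp_def)

lemma wf: "wf_qfa MM"
  unfolding wf_qfa_def MM_def using unit by auto

lemma nh: "nonhalt MM = {0}"
  unfolding nonhalt_def MM_def by auto

definition e0 :: "nat \<Rightarrow> complex" where "e0 = (\<lambda>i. if i = 0 then 1 else 0)"

lemma step_z: "qstep MM s ((\<lambda>i. 0::complex), p, r) = ((\<lambda>i. 0), p, r)"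
  unfolding qstep_def mat_app_def proj_def nsq_def by (simp add: Let_def fun_eq_iff MM_def three)

lemma step_0: "kind s = 0 \<Longrightarrow> qstep MM s (e0, p, r) = (e0, p, r)"
  unfolding qstep_def mat_app_def proj_def nsq_def nh
  by (auto simp: Let_def MM_def three TT_def swp_def e0_def fun_eq_iff)

lemma step_1: "kind s = 1 \<Longrightarrow> qstep MM s (e0, p, r) = ((\<lambda>i. 0), p + 1, r)"
  unfolding qstep_def mat_app_def proj_def nsq_def nh
  by (auto simp: Let_def MM_def three TT_def swp_def e0_def fun_eq_iff)

lemma step_2: "kind s = 2 \<Longrightarrow> qstep MM s (e0, p, r) = ((\<lambda>i. 0), p, r + 1)"
  unfolding qstep_def mat_app_def proj_def nsq_def nh
  by (auto simp: Let_def MM_def three TT_def swp_def e0_def fun_eq_iff)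

lemma fold_z: "fold (qstep MM) xs ((\<lambda>i. 0), p, r) = ((\<lambda>i. 0), p, r)"
  by (induction xs) (auto simp: step_z)

lemma fold_0: "fold (qstep MM) (map Sym (zip w (replicate (length w) 0))) (e0, p, r) = (e0, p, r)"
  by (induction w) (auto simp: step_0 kind_def)

definition hh :: "nat \<Rightarrow> nat list" where
  "hh n = (if n = 0 then [] else replicate (n - 1) 0 @ [1])"

lemma init_e0: "(\<lambda>i. if i = init MM then 1 else 0) = e0"
  by (simp add: MM_def e0_def)

lemma run_nil: "qrun MM (zip [] (hh 0)) = ((\<lambda>i. 0), 0, 1)"
  unfolding qrun_def init_e0 by (simp add: step_0 step_2 kind_def)

lemma run_snoc: "qrun MM (zip (w @ [c]) (hh (length (w @ [c])))) =
   (if c = a then ((\<lambda>i. 0), 1, 0) else ((\<lambda>i. 0), 0, 1))"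
proof -
  have "zip (w @ [c]) (hh (length (w @ [c]))) = zip w (replicate (length w) 0) @ [(c, 1)]"
    by (simp add: hh_def)
  then show ?thesis
    unfolding qrun_def init_e0
    using fold_0[of w 0 0]
    by (cases c) (simp_all add: step_0 step_1 step_2 step_z kind_def)
qed

lemma inQ: "La \<in> QFA_n"
  unfolding QFA_n_def mem_Collect_eq
proof (intro exI[of _ MM] exI[of _ "0::real"] exI[of _ "{0::nat,1}"] exI[of _ hh] conjI allI impI)
  show "wf_qfa MM" by (rule wf)
  show "(0::real) \<le> 0" by simp
  show "(0::real) < 1/2" by simp
  show "finite {0::nat,1}" by simp
  fix n show "length (hh n) = n" by (simp add: hh_def)
  show "set (hh n) \<subseteq> {0,1}" by (auto simp: hh_def)
  fix x :: "ab list"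
  have "(x \<in> La \<longrightarrow> 1 - 0 \<le> acc_prob MM (zip x (hh (length x)))) \<and>
        (x \<notin> La \<longrightarrow> 1 - 0 \<le> rej_prob MM (zip x (hh (length x))))"
  proof (cases x rule: rev_cases)
    case Nil then show ?thesis using run_nil by (simp add: La_iff rej_prob_def)
  next
    case (snoc w c) then show ?thesis using run_snoc[of w c]
      by (cases c) (simp_all add: La_iff acc_prob_def rej_prob_def)
  qed
  then show "x \<in> La \<Longrightarrow> 1 - 0 \<le> acc_prob MM (zip x (hh (length x)))"
    and "x \<notin> La \<Longrightarrow> 1 - 0 \<le> rej_prob MM (zip x (hh (length x)))" by auto
qed

theorem lemma3p3:
  shows "\<not> partial_order_condition La \<and> La \<in> QFA_n"
  using poc inQ by blast

end
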